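(* Let $\Delta,\omega,t$ be integers with $\omega\ge2$ and $2\le t\le\omega$, and suppose $\omega-1$ divides $\Delta$. Then \[ f_t(\Delta,\omega)=\rho_t\Big(T\big(\Delta+\tfrac{\Delta}{\omega-1},\,\omega\big)\Big)=\frac1t\binom{\omega-1}{t-1}\Big(\frac{\Delta}{\omega-1}\Big)^{t-1}. \]
   Context: $\mathcal{G}(\Delta,\omega)$ denotes the class of finite simple graphs $G$ with maximum degree $\Delta(G)\le\Delta$ and clique number $\omega(G)\le\omega$. $k_t(G)$ is the number of copies of $K_t$ in $G$ and $\rho_t(G)=k_t(G)/|V(G)|$. $f_t(\Delta,\omega)=\sup\{\rho_t(G): G\in\mathcal{G}(\Delta,\omega),\ |V(G)|\ge 1\}$. $T(n,r)$ denotes the $r$-partite Turán graph on $n$ vertices: the complete $r$-partite graph on $n$ vertices whose part sizes are all $\lfloor n/r\rfloor$ or $\lceil n/r\rceil$. *)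

theory Defs
  imports "HOL-Analysis.Analysis"
begin

text \<open>Finite simple graphs with vertex set V (a finite set of naturals; every finite
simple graph is isomorphic to one of these) and a symmetric irreflexive edge relation E
whose edges lie inside V.\<close>

definition simple_graph :: "nat set \<Rightarrow> (nat \<Rightarrow> nat \<Rightarrow> bool) \<Rightarrow> bool" where
  "simple_graph V E \<longleftrightarrow> finite V \<and>
     (\<forall>x y. E x y \<longrightarrow> x \<in> V \<and> y \<in> V \<and> x \<noteq> y) \<and>
     (\<forall>x y. E x y \<longrightarrow> E y x)"

definition degree :: "nat set \<Rightarrow> (nat \<Rightarrow> nat \<Rightarrow> bool) \<Rightarrow> nat \<Rightarrow> nat" where
  "degree V E v = card {u \<in> V. E v u}"

definition is_clique :: "nat set \<Rightarrow> (nat \<Rightarrow> nat \<Rightarrow> bool) \<Rightarrow> nat set \<Rightarrow> bool" where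
  "is_clique V E S \<longleftrightarrow> S \<subseteq> V \<and> (\<forall>x\<in>S. \<forall>y\<in>S. x \<noteq> y \<longrightarrow> E x y)"

definition in_class :: "nat \<Rightarrow> nat \<Rightarrow> nat set \<Rightarrow> (nat \<Rightarrow> nat \<Rightarrow> bool) \<Rightarrow> bool" where
  "in_class \<Delta> \<omega> V E \<longleftrightarrow> simple_graph V E \<and>
     (\<forall>v\<in>V. degree V E v \<le> \<Delta>) \<and>
     (\<forall>S. is_clique V E S \<longrightarrow> card S \<le> \<omega>)"

definition k_cliques :: "nat \<Rightarrow> nat set \<Rightarrow> (nat \<Rightarrow> nat \<Rightarrow> bool) \<Rightarrow> nat" where
  "k_cliques t V E = card {S. is_clique V E S \<and> card S = t}"

definition rho :: "nat \<Rightarrow> nat set \<Rightarrow> (nat \<Rightarrow> nat \<Rightarrow> bool) \<Rightarrow> real" where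
  "rho t V E = real (k_cliques t V E) / real (card V)"

text \<open>f_t(Delta, omega) as a supremum in the extended reals (so that no junk value of a
real Sup on an unbounded set can arise).\<close>
definition f_sup :: "nat \<Rightarrow> nat \<Rightarrow> nat \<Rightarrow> ereal" where
  "f_sup t \<Delta> \<omega> = (SUP G \<in> {(V, E). in_class \<Delta> \<omega> V E \<and> V \<noteq> {}}. ereal (rho t (fst G) (snd G)))"

text \<open>Turan graph T(n,r) on {0..<n}: vertex i lies in part (i mod r); the parts have sizes
floor(n/r) or ceiling(n/r), and two vertices are adjacent iff they lie in different parts.\<close>
definition turan_V :: "nat \<Rightarrow> nat set" where
  "turan_V n = {0..<n}"

definition turan_E :: "nat \<Rightarrow> nat \<Rightarrow> nat \<Rightarrow> nat \<Rightarrow> bool" where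
  "turan_E n r x y \<longleftrightarrow> x < n \<and> y < n \<and> x mod r \<noteq> y mod r"

end

theory Submission
  imports Defs
begin


definition nbh :: "nat set \<Rightarrow> (nat \<Rightarrow> nat \<Rightarrow> bool) \<Rightarrow> nat \<Rightarrow> nat set" where
  "nbh W E v = {u\<in>W. u \<noteq> v \<and> E v u \<and> E u v}"

lemma finite_cliques: "finite W \<Longrightarrow> finite {S. is_clique W E S \<and> P S}"
  by (rule finite_subset[of _ "Pow W"]) (auto simp: is_clique_def)

lemma k0: "finite W \<Longrightarrow> k_cliques 0 W E = 1"
proof -
  assume f: "finite W"
  have "{S. is_clique W E S \<and> card S = 0} = {{}}"
    using f by (auto simp: is_clique_def) (metis card_0_eq empty_iff finite_subset)
  then show ?thesis by (simp add: k_cliques_def)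
qed

lemma kempty: "s \<ge> 1 \<Longrightarrow> k_cliques s {} E = 0"
proof -
  assume "s \<ge> 1"
  then have h: "{S. is_clique {} E S \<and> card S = s} = {}" by (auto simp: is_clique_def)
  show ?thesis unfolding k_cliques_def h by (rule card.empty)
qed

lemma link:
  assumes "v \<in> W" "s \<ge> 1" "finite W"
  shows "card {S. is_clique W E S \<and> card S = s \<and> v \<in> S} \<le> k_cliques (s-1) (nbh W E v) E"
  unfolding k_cliques_def
proof (rule card_inj_on_le[where f="\<lambda>S. S - {v}"])
  show "inj_on (\<lambda>S. S - {v}) {S. is_clique W E S \<and> card S = s \<and> v \<in> S}"
    by (rule inj_onI) (metis CollectD insert_Diff)
  show "(\<lambda>S. S - {v}) ` {S. is_clique W E S \<and> card S = s \<and> v \<in> S}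
        \<subseteq> {S. is_clique (nbh W E v) E S \<and> card S = s - 1}"
  proof (rule image_subsetI)
    fix S assume "S \<in> {S. is_clique W E S \<and> card S = s \<and> v \<in> S}"
    then have S: "is_clique W E S" "v \<in> S" "s = card S" by auto
    have "finite S" using S assms(3) by (auto simp: is_clique_def intro: finite_subset)
    then show "S - {v} \<in> {S. is_clique (nbh W E v) E S \<and> card S = s - 1}"
      using S by (auto simp: is_clique_def nbh_def)
  qed
  show "finite {S. is_clique (nbh W E v) E S \<and> card S = s - 1}"
    by (rule finite_cliques) (use assms(3) in \<open>simp add: nbh_def\<close>)
qed

lemma nbh_clique:
  assumes "\<forall>S. is_clique W E S \<longrightarrow> card S \<le> Suc p" "v \<in> W" "finite W"
  shows "\<forall>T. is_clique (nbh W E v) E T \<longrightarrow> card T \<le> p"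
proof (intro allI impI)
  fix T assume T: "is_clique (nbh W E v) E T"
  have "is_clique W E (insert v T)" using T assms(2) by (auto simp: is_clique_def nbh_def)
  then have "card (insert v T) \<le> Suc p" using assms(1) by blast
  moreover have "finite T" "v \<notin> T" using T assms(3) by (auto simp: is_clique_def nbh_def intro: finite_subset)
  ultimately show "card T \<le> p" by simp
qed

lemma conv:
  fixes x u :: real
  assumes "x \<ge> 0" "u \<ge> 0"
  shows "x^k * ((real k + 1)*u - real k*x) \<le> u^(k+1)"
proof (cases "x = 0")
  case True then show ?thesis using assms by (cases k) auto
next
  case False
  then have xp: "x > 0" using assms by simp
  have "1 + real (k+1) * (u/x - 1) \<le> (1 + (u/x - 1))^(k+1)"
    by (rule Bernoulli_inequality) (use xp assms in \<open>simp add: field_simps\<close>)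
  then have "1 + real (k+1) * (u/x - 1) \<le> (u/x)^(k+1)" by simp
  then have "x^(k+1) * (1 + real (k+1) * (u/x - 1)) \<le> x^(k+1) * (u/x)^(k+1)"
    using xp by (intro mult_left_mono) auto
  also have "x^(k+1) * (u/x)^(k+1) = u^(k+1)" using xp by (simp add: power_divide)
  also have "x^(k+1) * (1 + real (k+1) * (u/x - 1)) = x^k * ((real k + 1)*u - real k*x)"
    using xp by (simp add: field_simps)
  finally show ?thesis .
qed

lemma mac:
  fixes x y :: real
  assumes "p \<ge> 1" "x \<ge> 0" "y \<ge> 0"
  shows "real (p choose Suc k) * x^Suc k + y * (real (p choose k) * x^k)
         \<le> real (Suc p choose Suc k) * ((p*x + y)/(p+1))^Suc k"
proof -
  define A where "A = real (p choose k)"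
  define B where "B = real (p choose Suc k)"
  define C where "C = real (Suc p choose Suc k)"
  define u where "u = (p*x + y)/(real p+1)"
  have h1: "(p+1)*A = C*(k+1)"
  proof -
    have e: "real (Suc p) * real (p choose k) = real (Suc p choose Suc k) * real (Suc k)"
      by (metis Suc_times_binomial_eq of_nat_mult)
    then show ?thesis by (simp add: A_def C_def add.commute)
  qed
  have h2: "C = A + B" unfolding A_def B_def C_def by simp
  have u: "(p+1)*u = p*x + y" unfolding u_def by (simp add: field_simps)
  have u0: "u \<ge> 0" unfolding u_def using assms by simp
  have C0: "C \<ge> 0" unfolding C_def by simp
  have key: "C*((real k + 1)*u - real k*x) = B*x + A*y"
  proof -
    have "(p+1) * (C*((real k + 1)*u - real k*x)) = (p+1) * (B*x + A*y)"
    proof -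
      have "(p+1) * (C*((real k + 1)*u - real k*x)) = (C*(k+1))*((p+1)*u) - (p+1)*C*k*x" by (simp add: algebra_simps)
      also have "\<dots> = (p+1)*A*(p*x+y) - (p+1)*(A+B)*k*x"
      proof -
        have "(C*(k+1))*((p+1)*u) = (p+1)*A*(p*x+y)" by (simp only: h1[symmetric] u)
        moreover have "(p+1)*C*k*x = (p+1)*(A+B)*k*x" by (simp only: h2)
        ultimately show ?thesis by linarith
      qed
      also have "\<dots> = (p+1)*(A*p*x + A*y - A*k*x - B*k*x)" by (simp add: algebra_simps)
      also have "A*p - A*k - B*k = B"
      proof -
        have "(p+1)*A = (A+B)*(k+1)" using h1 h2 by simp
        then show ?thesis by (simp add: algebra_simps)
      qed
      then have "A*p*x + A*y - A*k*x - B*k*x = B*x + A*y"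
        by (metis (no_types, lifting) add.commute add_diff_cancel_left' diff_diff_eq2 left_diff_distrib)
      finally show ?thesis by simp
    qed
    then show ?thesis by simp
  qed
  have "B * x^Suc k + y*(A*x^k) = x^k * (C*((real k + 1)*u - real k*x))" using key by (simp add: algebra_simps)
  also have "\<dots> = C * (x^k * ((real k + 1)*u - real k*x))" by simp
  also have "\<dots> \<le> C * u^Suc k" using conv[OF assms(2) u0, of k] C0 by (intro mult_left_mono) auto
  finally show ?thesis unfolding A_def B_def C_def u_def .
qed



lemma zykov:
  assumes "1 \<le> r"
  shows "finite W \<Longrightarrow> \<forall>S. is_clique W E S \<longrightarrow> card S \<le> r \<Longrightarrow>
    real (k_cliques s W E) \<le> real (r choose s) * (real (card W) / real r)^s"
  using assms
proof (induction r arbitrary: W s rule: nat_induct_at_least)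
  case base
  show ?case
  proof (cases "s = 0")
    case True then show ?thesis using k0[OF base(1)] by simp
  next
    case False
    show ?thesis
    proof (cases "s = 1")
      case True
      have "{S. is_clique W E S \<and> card S = 1} \<subseteq> (\<lambda>w. {w}) ` W"
        by (auto simp: is_clique_def card_1_singleton_iff)
      then have "card {S. is_clique W E S \<and> card S = 1} \<le> card ((\<lambda>w. {w}) ` W)"
        using base(1) by (intro card_mono) auto
      also have "\<dots> \<le> card W" by (rule card_image_le[OF base(1)])
      finally show ?thesis using True by (simp add: k_cliques_def)
    next
      case False
      then have h: "{S. is_clique W E S \<and> card S = s} = {}" using \<open>s \<noteq> 0\<close> base(2) by force
      show ?thesis unfolding k_cliques_def h by simp
    qed
  qed
next
  case (Suc p)
  note IH = Suc.IH
  have fW: "finite W" and cW: "\<forall>S. is_clique W E S \<longrightarrow> card S \<le> Suc p" using Suc.prems by auto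
  show ?case
  proof (cases "s = 0")
    case True then show ?thesis using k0[OF fW] by simp
  next
    case s0: False
    show ?thesis
    proof (cases "W = {}")
      case True then show ?thesis using s0 kempty[of s E] by simp
    next
      case Wne: False
      define c where "c u = card {S. is_clique W E S \<and> card S = s \<and> u \<in> S}" for u
      have "Max (c ` W) \<in> c ` W" using fW Wne by (intro Max_in) auto
      then obtain v where v: "v \<in> W" "c v = Max (c ` W)" by auto
      have cmax: "c u \<le> c v" if "u \<in> W" for u using v(2) fW that by simp
      define N where "N = nbh W E v"
      define I where "I = W - N"
      have NW: "N \<subseteq> W" unfolding N_def nbh_def by auto
      have fN: "finite N" using NW fW finite_subset by auto
      have fI: "finite I" using fW I_def by auto
      have cI: "card I = card W - card N" unfolding I_def using NW fN by (simp add: card_Diff_subset)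
      have sub: "{S. is_clique W E S \<and> card S = s} \<subseteq> {S. is_clique N E S \<and> card S = s}
          \<union> (\<Union>u\<in>I. {S. is_clique W E S \<and> card S = s \<and> u \<in> S})"
      proof
        fix S assume S: "S \<in> {S. is_clique W E S \<and> card S = s}"
        show "S \<in> {S. is_clique N E S \<and> card S = s} \<union> (\<Union>u\<in>I. {S. is_clique W E S \<and> card S = s \<and> u \<in> S})"
        proof (cases "S \<subseteq> N")
          case True then show ?thesis using S by (auto simp: is_clique_def)
        next
          case False
          then obtain u where "u \<in> S" "u \<notin> N" by auto
          moreover have "S \<subseteq> W" using S by (auto simp: is_clique_def)
          ultimately show ?thesis using S unfolding I_def by blast
        qed
      qed
      have "k_cliques s W E \<le> card ({S. is_clique N E S \<and> card S = s}
          \<union> (\<Union>u\<in>I. {S. is_clique W E S \<and> card S = s \<and> u \<in> S}))"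
        unfolding k_cliques_def
        by (rule card_mono[OF _ sub]) (use fN fW fI finite_cliques in auto)
      also have "\<dots> \<le> k_cliques s N E + card (\<Union>u\<in>I. {S. is_clique W E S \<and> card S = s \<and> u \<in> S})"
        unfolding k_cliques_def by (rule card_Un_le)
      also have "card (\<Union>u\<in>I. {S. is_clique W E S \<and> card S = s \<and> u \<in> S}) \<le> (\<Sum>u\<in>I. c u)"
        unfolding c_def by (rule card_UN_le[OF fI])
      also have "(\<Sum>u\<in>I. c u) \<le> (\<Sum>u\<in>I. c v)" using cmax I_def by (intro sum_mono) auto
      also have "(\<Sum>u\<in>I. c v) = card I * c v" by simp
      also have "c v \<le> k_cliques (s-1) N E" unfolding c_def N_def using link[OF v(1) _ fW] s0 by simp
      finally have kb: "k_cliques s W E \<le> k_cliques s N E + card I * k_cliques (s-1) N E"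
        by (simp add: mult_left_mono)
      have cN: "\<forall>T. is_clique N E T \<longrightarrow> card T \<le> p" unfolding N_def by (rule nbh_clique[OF cW v(1) fW])
      have i1: "real (k_cliques s N E) \<le> real (p choose s) * (real (card N) / real p)^s"
        by (rule IH[OF fN cN])
      have i2: "real (k_cliques (s-1) N E) \<le> real (p choose (s-1)) * (real (card N) / real p)^(s-1)"
        by (rule IH[OF fN cN])
      obtain j where j: "s = Suc j" using s0 by (cases s) auto
      define x where "x = real (card N) / real p"
      define y where "y = real (card W) - real (card N)"
      have cNW: "card N \<le> card W" using NW fW by (rule card_mono[rotated])
      have x0: "x \<ge> 0" unfolding x_def by simp
      have y0: "y \<ge> 0" unfolding y_def using cNW by simp
      have rI: "real (card I) = y" unfolding y_def cI using cNW by (simp add: of_nat_diff)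
      have pxy: "p*x + y = real (card W)" unfolding x_def y_def using Suc.hyps by simp
      have "real (k_cliques s W E) \<le> real (k_cliques s N E) + y * real (k_cliques (s-1) N E)"
        using kb rI by (metis of_nat_add of_nat_le_iff of_nat_mult)
      also have "\<dots> \<le> real (p choose Suc j) * x^Suc j + y * (real (p choose j) * x^j)"
        using i1 i2 y0 j unfolding x_def by (intro add_mono mult_left_mono) auto
      also have "\<dots> \<le> real (Suc p choose Suc j) * ((p*x + y)/(real p+1))^Suc j"
        by (rule mac[OF Suc.hyps x0 y0])
      also have "\<dots> = real (Suc p choose s) * (real (card W) / real (Suc p))^s"
        using j pxy by (simp add: add.commute)
      finally show ?thesis .
    qed
  qed
qed



lemma dc:
  assumes "finite V" "finite C" "\<forall>S\<in>C. S \<subseteq> V"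
  shows "(\<Sum>v\<in>V. card {S\<in>C. v\<in>S}) = (\<Sum>S\<in>C. card S)"
proof -
  have "(\<Sum>v\<in>V. card {S\<in>C. v\<in>S}) = (\<Sum>v\<in>V. \<Sum>S\<in>C. if v \<in> S then 1 else 0)"
    using assms(2) by (simp add: sum.If_cases Int_def)
  also have "\<dots> = (\<Sum>S\<in>C. \<Sum>v\<in>V. if v \<in> S then 1 else 0)" by (rule sum.swap)
  also have "\<dots> = (\<Sum>S\<in>C. card S)"
  proof (rule sum.cong[OF refl])
    fix S assume "S \<in> C"
    then have "V \<inter> {v. v \<in> S} = S" using assms(3) by auto
    then show "(\<Sum>v\<in>V. if v \<in> S then 1 else 0) = card S" using assms(1) by (simp add: sum.If_cases)
  qed
  finally show ?thesis .
qed

lemma upper: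
  assumes cl: "in_class \<Delta> \<omega> V E" and Vne: "V \<noteq> {}" and w2: "\<omega> \<ge> 2" and t1: "1 \<le> t"
  shows "rho t V E \<le> (1 / real t) * real ((\<omega>-1) choose (t-1)) * (real \<Delta> / real (\<omega>-1))^(t-1)"
proof -
  define M where "M = real ((\<omega>-1) choose (t-1)) * (real \<Delta> / real (\<omega>-1))^(t-1)"
  have fV: "finite V" using cl by (simp add: in_class_def simple_graph_def)
  have cV: "\<forall>S. is_clique V E S \<longrightarrow> card S \<le> Suc (\<omega>-1)" using cl w2 by (simp add: in_class_def)
  have dV: "\<forall>v\<in>V. degree V E v \<le> \<Delta>" using cl by (simp add: in_class_def)
  define C where "C = {S. is_clique V E S \<and> card S = t}"
  have fC: "finite C" unfolding C_def by (rule finite_cliques[OF fV])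
  have CV: "\<forall>S\<in>C. S \<subseteq> V" unfolding C_def by (auto simp: is_clique_def)
  have "(\<Sum>v\<in>V. card {S\<in>C. v\<in>S}) = (\<Sum>S\<in>C. card S)" by (rule dc[OF fV fC CV])
  also have "\<dots> = t * card C" unfolding C_def by simp
  finally have e: "(\<Sum>v\<in>V. card {S\<in>C. v\<in>S}) = t * card C" .
  have each: "real (card {S\<in>C. v\<in>S}) \<le> M" if v: "v \<in> V" for v
  proof -
    have "card {S\<in>C. v\<in>S} = card {S. is_clique V E S \<and> card S = t \<and> v \<in> S}"
      unfolding C_def by (metis (no_types, lifting) Collect_cong mem_Collect_eq)
    also have "\<dots> \<le> k_cliques (t-1) (nbh V E v) E" by (rule link[OF v t1 fV])
    finally have a: "real (card {S\<in>C. v\<in>S}) \<le> real (k_cliques (t-1) (nbh V E v) E)" by simp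
    have fN: "finite (nbh V E v)" using fV by (simp add: nbh_def)
    have "real (k_cliques (t-1) (nbh V E v) E) \<le> real ((\<omega>-1) choose (t-1)) * (real (card (nbh V E v)) / real (\<omega>-1))^(t-1)"
      by (rule zykov) (use w2 fN nbh_clique[OF cV v fV] in auto)
    also have "\<dots> \<le> M"
    proof -
      have "card (nbh V E v) \<le> card {u\<in>V. E v u}" using fV by (intro card_mono) (auto simp: nbh_def)
      also have "\<dots> \<le> \<Delta>" using dV v by (simp add: degree_def)
      finally have "real (card (nbh V E v)) \<le> real \<Delta>" by simp
      then have "(real (card (nbh V E v)) / real (\<omega>-1))^(t-1) \<le> (real \<Delta> / real (\<omega>-1))^(t-1)"
        by (intro power_mono divide_right_mono) auto
      then show ?thesis unfolding M_def by (intro mult_left_mono) auto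
    qed
    finally show ?thesis using a by linarith
  qed
  have "real t * real (card C) = (\<Sum>v\<in>V. real (card {S\<in>C. v\<in>S}))"
    using e by (metis of_nat_mult of_nat_sum)
  also have "\<dots> \<le> (\<Sum>v\<in>V. M)" using each by (rule sum_mono)
  also have "\<dots> = real (card V) * M" by simp
  finally have tb: "real t * real (card C) \<le> real (card V) * M" .
  have cVp: "real (card V) > 0" using fV Vne by (simp add: card_gt_0_iff)
  have tp: "real t > 0" using t1 by simp
  have "rho t V E = real (card C) / real (card V)" unfolding rho_def k_cliques_def C_def by simp
  also have "\<dots> \<le> M / real t" using tb cVp tp by (simp add: field_simps)
  finally show ?thesis unfolding M_def by simp
qed



lemma modq: "j < (w::nat) \<Longrightarrow> (j + w*q) mod w = j" by simp

lemma turan_count: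
  assumes w0: "0 < w"
  shows "k_cliques t {0..<w*a} (turan_E (w*a) w) = (w choose t) * a^t"
proof -
  define Sig where "Sig = Sigma {J. J \<subseteq> {0..<w} \<and> card J = t} (\<lambda>J. J \<rightarrow>\<^sub>E {0..<a})"
  define g where "g = (\<lambda>(J, f::nat\<Rightarrow>nat). (\<lambda>j. j + w * f j) ` J)"
  define K where "K = {S. is_clique {0..<w*a} (turan_E (w*a) w) S \<and> card S = t}"
  have injm: "inj_on (\<lambda>j. j + w * f j) J" if "J \<subseteq> {0..<w}" for J and f :: "nat \<Rightarrow> nat"
  proof (rule inj_onI)
    fix x y assume "x \<in> J" "y \<in> J" "x + w * f x = y + w * f y"
    then have "(x + w * f x) mod w = (y + w * f y) mod w" by simp
    moreover have "x < w" "y < w" using that \<open>x \<in> J\<close> \<open>y \<in> J\<close> by auto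
    ultimately show "x = y" by simp
  qed
  have modimg: "(\<lambda>i. i mod w) ` g (J, f) = J" if "J \<subseteq> {0..<w}" for J f
  proof -
    have "(\<lambda>i. i mod w) ` g (J, f) = (\<lambda>j. (j + w * f j) mod w) ` J" unfolding g_def by (simp add: image_image)
    also have "\<dots> = (\<lambda>j. j) ` J" using that by (intro image_cong) auto
    finally show ?thesis by simp
  qed
  have inj: "inj_on g Sig"
  proof (rule inj_onI)
    fix X Y assume X: "X \<in> Sig" and Y: "Y \<in> Sig" and eq: "g X = g Y"
    obtain J f where Xd: "X = (J, f)" by (cases X)
    obtain J' f' where Yd: "Y = (J', f')" by (cases Y)
    have J: "J \<subseteq> {0..<w}" "f \<in> J \<rightarrow>\<^sub>E {0..<a}" using X Xd Sig_def by auto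
    have J': "J' \<subseteq> {0..<w}" "f' \<in> J' \<rightarrow>\<^sub>E {0..<a}" using Y Yd Sig_def by auto
    have JJ: "J = J'" using modimg[OF J(1), of f] modimg[OF J'(1), of f'] eq Xd Yd by simp
    have "f = f'"
    proof (rule PiE_ext[OF J(2)])
      show "f' \<in> J \<rightarrow>\<^sub>E {0..<a}" using J'(2) JJ by simp
      fix j assume j: "j \<in> J"
      then have "j + w * f j \<in> g Y" using eq Xd unfolding g_def by auto
      then obtain j' where j': "j' \<in> J" "j + w * f j = j' + w * f' j'" using Yd JJ unfolding g_def by auto
      then have "(j + w * f j) mod w = (j' + w * f' j') mod w" by simp
      moreover have "j < w" "j' < w" using J(1) j j'(1) JJ by auto
      ultimately have "j = j'" by simp
      then show "f j = f' j" using j' w0 by simp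
    qed
    then show "X = Y" using Xd Yd JJ by simp
  qed
  have img: "g ` Sig = K"
  proof
    show "g ` Sig \<subseteq> K"
    proof
      fix S assume "S \<in> g ` Sig"
      then obtain J f where Jf: "J \<subseteq> {0..<w}" "card J = t" "f \<in> J \<rightarrow>\<^sub>E {0..<a}" and S: "S = g (J, f)"
        unfolding Sig_def by auto
      have lt: "j + w * f j < w * a" if "j \<in> J" for j
      proof -
        have "f j < a" using Jf(3) that by auto
        then have "w * (f j + 1) \<le> w * a" by (intro mult_le_mono2) simp
        moreover have "j < w" using Jf(1) that by auto
        ultimately show ?thesis by simp
      qed
      have S': "S = (\<lambda>j. j + w * f j) ` J" using S g_def by simp
      have sub: "(\<lambda>j. j + w * f j) ` J \<subseteq> {0..<w * a}" using lt by auto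
      have pw: "\<forall>x\<in>(\<lambda>j. j + w * f j) ` J. \<forall>y\<in>(\<lambda>j. j + w * f j) ` J. x \<noteq> y \<longrightarrow> turan_E (w*a) w x y"
      proof (intro ballI impI)
        fix x y assume "x \<in> (\<lambda>j. j + w * f j) ` J" "y \<in> (\<lambda>j. j + w * f j) ` J" "x \<noteq> y"
        then obtain jx jy where o: "jx \<in> J" "jy \<in> J" "x = jx + w * f jx" "y = jy + w * f jy" "jx \<noteq> jy"
          by auto
        have "jx < w" "jy < w" using Jf(1) o(1,2) by auto
        then show "turan_E (w*a) w x y" unfolding turan_E_def using lt o by auto
      qed
      have "is_clique {0..<w*a} (turan_E (w*a) w) S"
        unfolding is_clique_def S' using sub pw by blast
      moreover have "card S = t" unfolding S' using card_image[OF injm[OF Jf(1)]] Jf(2) by simp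
      ultimately show "S \<in> K" unfolding K_def by simp
    qed
  next
    show "K \<subseteq> g ` Sig"
    proof
      fix S assume "S \<in> K"
      then have cl: "is_clique {0..<w*a} (turan_E (w*a) w) S" and cS: "card S = t" unfolding K_def by auto
      have Ssub: "S \<subseteq> {0..<w*a}" using cl by (simp add: is_clique_def)
      have im: "inj_on (\<lambda>i. i mod w) S"
        using cl by (auto simp: inj_on_def is_clique_def turan_E_def)
      define J where "J = (\<lambda>i. i mod w) ` S"
      define h where "h = the_inv_into S (\<lambda>i. i mod w)"
      define f where "f = restrict (\<lambda>j. h j div w) J"
      have J1: "J \<subseteq> {0..<w}" unfolding J_def using w0 by auto
      have J2: "card J = t" unfolding J_def using card_image[OF im] cS by simp
      have hS: "h j \<in> S" if "j \<in> J" for j unfolding h_def using the_inv_into_into[OF im, of j S] that J_def by auto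
      have f3: "f \<in> J \<rightarrow>\<^sub>E {0..<a}" unfolding f_def restrict_PiE_iff
      proof
        fix j assume "j \<in> J"
        then have "h j \<in> {0..<w*a}" using hS Ssub by blast
        then have "h j < a * w" by (simp add: mult.commute)
        then show "h j div w \<in> {0..<a}" using less_mult_imp_div_less by auto
      qed
      have "g (J, f) = (\<lambda>j. j + w * (h j div w)) ` J" unfolding g_def f_def by (auto simp: restrict_def)
      also have "\<dots> = (\<lambda>i. i mod w + w * (h (i mod w) div w)) ` S" unfolding J_def by (simp add: image_image)
      also have "\<dots> = (\<lambda>i. i) ` S"
      proof (rule image_cong[OF refl])
        fix i assume "i \<in> S"
        then have "h (i mod w) = i" unfolding h_def using the_inv_into_f_f[OF im] by simp
        then show "i mod w + w * (h (i mod w) div w) = i" by (simp add: mod_mult_div_eq)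
      qed
      finally have "g (J, f) = S" by simp
      moreover have "(J, f) \<in> Sig" unfolding Sig_def using J1 J2 f3 by auto
      ultimately show "S \<in> g ` Sig" by (metis image_eqI)
    qed
  qed
  have "k_cliques t {0..<w*a} (turan_E (w*a) w) = card K" unfolding k_cliques_def K_def ..
  also have "\<dots> = card Sig" using card_image[OF inj] img by simp
  also have "\<dots> = (\<Sum>J\<in>{J. J \<subseteq> {0..<w} \<and> card J = t}. card (J \<rightarrow>\<^sub>E {0..<a}))"
    unfolding Sig_def by (rule card_SigmaI) (auto intro: finite_subset finite_PiE)
  also have "\<dots> = (\<Sum>J\<in>{J. J \<subseteq> {0..<w} \<and> card J = t}. a^t)"
  proof (rule sum.cong[OF refl])
    fix J assume "J \<in> {J. J \<subseteq> {0..<w} \<and> card J = t}"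
    then have "finite J" "card J = t" by (auto intro: finite_subset)
    then show "card (J \<rightarrow>\<^sub>E {0..<a}) = a^t" by (simp add: card_PiE)
  qed
  also have "\<dots> = (w choose t) * a^t" using n_subsets[of "{0..<w}" t] by simp
  finally show ?thesis .
qed



lemma turan_class:
  assumes w2: "\<omega> \<ge> 2" and a0: "a > 0" and D: "\<Delta> = (\<omega>-1)*a"
  shows "in_class \<Delta> \<omega> {0..<\<omega>*a} (turan_E (\<omega>*a) \<omega>)"
proof -
  define n where "n = \<omega>*a"
  have sg: "simple_graph {0..<n} (turan_E n \<omega>)"
    unfolding simple_graph_def turan_E_def by auto
  have deg: "degree {0..<n} (turan_E n \<omega>) v \<le> \<Delta>" for v
  proof -
    define T where "T = (\<lambda>q. v mod \<omega> + \<omega>*q) ` {0..<a}"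
    have injT: "inj_on (\<lambda>q. v mod \<omega> + \<omega>*q) {0..<a}" using w2 by (auto simp: inj_on_def)
    have cT: "card T = a" unfolding T_def using card_image[OF injT] by simp
    have Tsub: "T \<subseteq> {0..<n}"
    proof
      fix i assume "i \<in> T"
      then obtain q where q: "q < a" "i = v mod \<omega> + \<omega>*q" unfolding T_def by auto
      have "v mod \<omega> < \<omega>" using w2 by simp
      moreover have "\<omega>*(q+1) \<le> \<omega>*a" using q(1) by (intro mult_le_mono2) simp
      ultimately show "i \<in> {0..<n}" using q(2) unfolding n_def by simp
    qed
    have "{u\<in>{0..<n}. turan_E n \<omega> v u} \<subseteq> {0..<n} - T"
      unfolding T_def turan_E_def by auto
    then have "card {u\<in>{0..<n}. turan_E n \<omega> v u} \<le> card ({0..<n} - T)" by (intro card_mono) auto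
    also have "\<dots> = n - a" using Tsub cT by (simp add: card_Diff_subset finite_subset)
    also have "\<dots> = \<Delta>" unfolding n_def D using w2 by (simp add: diff_mult_distrib)
    finally show ?thesis unfolding degree_def .
  qed
  have cl: "card S \<le> \<omega>" if "is_clique {0..<n} (turan_E n \<omega>) S" for S
  proof -
    have "inj_on (\<lambda>i. i mod \<omega>) S" using that by (auto simp: inj_on_def is_clique_def turan_E_def)
    moreover have "(\<lambda>i. i mod \<omega>) ` S \<subseteq> {0..<\<omega>}" using w2 by auto
    ultimately show ?thesis using card_inj_on_le[of "\<lambda>i. i mod \<omega>" S "{0..<\<omega>}"] by simp
  qed
  show ?thesis using sg deg cl unfolding in_class_def n_def by auto
qed

theorem mainTheorem5:
  fixes \<Delta> \<omega> t :: nat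
  assumes "\<omega> \<ge> 2" and "2 \<le> t" and "t \<le> \<omega>" and "(\<omega> - 1) dvd \<Delta>"
  shows "f_sup t \<Delta> \<omega> = ereal (rho t (turan_V (\<Delta> + \<Delta> div (\<omega> - 1)))
                                      (turan_E (\<Delta> + \<Delta> div (\<omega> - 1)) \<omega>))
       \<and> rho t (turan_V (\<Delta> + \<Delta> div (\<omega> - 1))) (turan_E (\<Delta> + \<Delta> div (\<omega> - 1)) \<omega>)
           = (1 / real t) * real ((\<omega> - 1) choose (t - 1))
               * (real \<Delta> / real (\<omega> - 1)) ^ (t - 1)"
proof -
  obtain a where a: "\<Delta> = (\<omega>-1)*a" using assms(4) by blast
  have w1: "\<omega> - 1 > 0" using assms(1) by simp
  have da: "\<Delta> div (\<omega>-1) = a" using a w1 by simp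
  have nE: "\<Delta> + \<Delta> div (\<omega> - 1) = \<omega> * a" using da a assms(1)
    by (metis Suc_diff_1 add.commute le_numeral_extra(2) less_le_trans mult_Suc not_less pos2)
  have ra: "real \<Delta> / real (\<omega>-1) = real a" using a w1 by simp
  define R where "R = (1 / real t) * real ((\<omega> - 1) choose (t - 1)) * (real \<Delta> / real (\<omega> - 1)) ^ (t - 1)"
  have R: "R = (1 / real t) * real ((\<omega> - 1) choose (t - 1)) * real a ^ (t - 1)" unfolding R_def ra ..
  have rhoT: "rho t {0..<\<omega>*a} (turan_E (\<omega>*a) \<omega>) = R"
  proof (cases "a = 0")
    case True
    have "t - 1 \<noteq> 0" using assms(2) by simp
    then show ?thesis unfolding rho_def R True by simp
  next
    case False
    have bin: "real t * real (\<omega> choose t) = real \<omega> * real ((\<omega>-1) choose (t-1))"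
      using times_binomial_minus1_eq[of t \<omega>] assms(2) by (metis of_nat_mult not_numeral_le_zero not_gr_zero)
    have at: "real a ^ t = real a * real a ^ (t-1)" using assms(2)
      by (metis Suc_diff_1 less_le_trans pos2 power_Suc)
    have "rho t {0..<\<omega>*a} (turan_E (\<omega>*a) \<omega>) = real (\<omega> choose t) * real a ^ t / (real \<omega> * real a)"
      unfolding rho_def using turan_count[of \<omega> t a] assms(1) by simp
    also have "\<dots> = R" unfolding R using False assms(1,2) bin at by (simp add: field_simps)
    finally show ?thesis .
  qed
  define X where "X = {(V, E). in_class \<Delta> \<omega> V E \<and> V \<noteq> {}}"
  have le: "f_sup t \<Delta> \<omega> \<le> ereal R"
    unfolding f_sup_def
  proof (rule SUP_least)
    fix G assume "G \<in> {(V, E). in_class \<Delta> \<omega> V E \<and> V \<noteq> {}}"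
    then obtain V E where G: "G = (V, E)" "in_class \<Delta> \<omega> V E" "V \<noteq> {}" by auto
    have "t \<ge> 1" using assms(2) by simp
    then have "rho t V E \<le> R" unfolding R_def by (rule upper[OF G(2) G(3) assms(1)])
    then show "ereal (rho t (fst G) (snd G)) \<le> ereal R" using G(1) by simp
  qed
  have ge: "ereal R \<le> f_sup t \<Delta> \<omega>"
  proof (cases "a = 0")
    case False
    have "({0..<\<omega>*a}, turan_E (\<omega>*a) \<omega>) \<in> {(V, E). in_class \<Delta> \<omega> V E \<and> V \<noteq> {}}"
      using turan_class[OF assms(1) _ a] False assms(1) by auto
    then show ?thesis unfolding f_sup_def using rhoT by (intro SUP_upper2) auto
  next
    case True
    have R0: "R = 0" unfolding R True using assms(2) by simp
    have "({0}, \<lambda>_ _. False) \<in> {(V, E). in_class \<Delta> \<omega> V E \<and> V \<noteq> {}}"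
    proof -
      have "card S \<le> \<omega>" if "is_clique {0} (\<lambda>_ _. False) S" for S
      proof -
        have "S \<subseteq> {0}" using that by (simp add: is_clique_def)
        then have "card S \<le> 1" using card_mono[of "{0::nat}" S] by simp
        then show ?thesis using assms(1) by simp
      qed
      then show ?thesis by (auto simp: in_class_def simple_graph_def degree_def)
    qed
    moreover have "ereal R \<le> ereal (rho t {0} (\<lambda>_ _. False))" unfolding R0 rho_def by simp
    ultimately show ?thesis unfolding f_sup_def by (intro SUP_upper2) auto
  qed
  have "f_sup t \<Delta> \<omega> = ereal R" using le ge by (rule antisym)
  then show ?thesis using rhoT unfolding nE turan_V_def R_def by simp
qed

end
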